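(* Let $\mathcal{H}$ be a supersolvable arrangement of rank $n\ge3$ with decomposition $\mathcal{H}=\mathcal{H}_0\sqcup\mathcal{H}_1$ as in the definition of supersolvability. Then the graph of regions $G(\mathcal{H})$ is isomorphic to a graph that is $\ell$-suspended over $G(\mathcal{H}_0)$, where $\ell:=|\mathcal{H}_1|$.
   Context: A hyperplane arrangement is a finite set of linear hyperplanes in $\mathbb{R}^d$; its rank is the dimension of the span of the normals; its regions are the connected components of the complement of the union of the hyperplanes, and its graph of regions $G(\mathcal{H})$ has the regions as vertices, two adjacent iff separated by exactly one hyperplane. An arrangement of rank $n$ is supersolvable if $n\le 2$, or $n\ge 3$ and $\mathcal{H}=\mathcal{H}_0\sqcup\mathcal{H}_1$ with both parts nonempty, $\mathcal{H}_0$ supersolvable of rank $n-1$, and for any distinct $H',H''\in\mathcal{H}_1$ some $H\in\mathcal{H}_0$ satisfies $H'\cap H''\subseteq H$. For a graph $H=(V,E)$ and an integer $\ell\ge1$, let $P_\ell$ be the path on $0,1,\dots,\ell$ and $H\times P_\ell$ the Cartesian product (vertex set $V\times\{0,\dots,\ell\}$, with $(x,i)\sim(y,j)$ iff ($\{x,y\}\in E$ and $i=j$) or ($x=y$ and $|i-j|=1$)). A graph $G$ is $\ell$-suspended over $H$ if $G$ is a spanning subgraph of $H\times P_\ell$ that contains all edges $\{(x,i),(x,i+1)\}$ ($x\in V$, $0\le i<\ell$) and all edges $\{(x,0),(y,0)\}$ and $\{(x,\ell),(y,\ell)\}$ for $\{x,y\}\in E$. *)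

theory Defs
  imports "HOL-Analysis.Analysis"
begin

definition linear_hyperplane :: "'a::euclidean_space set \<Rightarrow> bool" where
  "linear_hyperplane H \<longleftrightarrow> (\<exists>a. a \<noteq> 0 \<and> H = {x. a \<bullet> x = 0})"

definition arrangement :: "'a::euclidean_space set set \<Rightarrow> bool" where
  "arrangement A \<longleftrightarrow> finite A \<and> (\<forall>H\<in>A. linear_hyperplane H)"

definition normals :: "'a::euclidean_space set set \<Rightarrow> 'a set" where
  "normals A = {a. a \<noteq> 0 \<and> (\<exists>H\<in>A. H = {x. a \<bullet> x = 0})}"

definition arr_rank :: "'a::euclidean_space set set \<Rightarrow> nat" where
  "arr_rank A = dim (span (normals A))"

definition regions :: "'a::euclidean_space set set \<Rightarrow> 'a set set" where
  "regions A = components (UNIV - \<Union>A)"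

definition separates :: "'a::euclidean_space set \<Rightarrow> 'a set \<Rightarrow> 'a set \<Rightarrow> bool" where
  "separates H R R' \<longleftrightarrow> (\<exists>a. a \<noteq> 0 \<and> H = {x. a \<bullet> x = 0} \<and>
      (\<forall>x\<in>R. 0 < a \<bullet> x) \<and> (\<forall>x\<in>R'. a \<bullet> x < 0))"

inductive supersolvable :: "'a::euclidean_space set set \<Rightarrow> bool" where
  rank_le2: "arrangement A \<Longrightarrow> arr_rank A \<le> 2 \<Longrightarrow> supersolvable A"
| step: "arrangement A \<Longrightarrow> arr_rank A \<ge> 3 \<Longrightarrow> A = A0 \<union> A1 \<Longrightarrow> A0 \<inter> A1 = {} \<Longrightarrow>
         A0 \<noteq> {} \<Longrightarrow> A1 \<noteq> {} \<Longrightarrow> supersolvable A0 \<Longrightarrow> arr_rank A0 = arr_rank A - 1 \<Longrightarrow>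
         (\<forall>H1\<in>A1. \<forall>H2\<in>A1. H1 \<noteq> H2 \<longrightarrow> (\<exists>H\<in>A0. H1 \<inter> H2 \<subseteq> H)) \<Longrightarrow>
         supersolvable A"

type_synonym 'v graph = "'v set \<times> 'v set set"

definition region_graph :: "'a::euclidean_space set set \<Rightarrow> 'a set graph" where
  "region_graph A = (regions A,
     {{R, R'} | R R'. R \<in> regions A \<and> R' \<in> regions A \<and> R \<noteq> R' \<and>
        card {H\<in>A. separates H R R' \<or> separates H R' R} = 1})"

definition graph_iso :: "'v graph \<Rightarrow> 'w graph \<Rightarrow> bool" where
  "graph_iso G G' \<longleftrightarrow> (\<exists>f. bij_betw f (fst G) (fst G') \<and>
     (\<forall>x\<in>fst G. \<forall>y\<in>fst G. {x, y} \<in> snd G \<longleftrightarrow> {f x, f y} \<in> snd G'))"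

definition path_product :: "'v graph \<Rightarrow> nat \<Rightarrow> ('v \<times> nat) graph" where
  "path_product G l = (fst G \<times> {0..l},
     {{(x, i), (y, j)} | x y i j. x \<in> fst G \<and> y \<in> fst G \<and> i \<le> l \<and> j \<le> l \<and>
        (({x, y} \<in> snd G \<and> i = j) \<or> (x = y \<and> (j = i + 1 \<or> i = j + 1)))})"

definition suspended :: "('v \<times> nat) graph \<Rightarrow> nat \<Rightarrow> 'v graph \<Rightarrow> bool" where
  "suspended G l H \<longleftrightarrow>
     fst G = fst (path_product H l) \<and> snd G \<subseteq> snd (path_product H l) \<and>
     (\<forall>x\<in>fst H. \<forall>i<l. {(x, i), (x, i + 1)} \<in> snd G) \<and>
     (\<forall>x\<in>fst H. \<forall>y\<in>fst H. {x, y} \<in> snd H \<longrightarrow>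
        {(x, 0), (y, 0)} \<in> snd G \<and> {(x, l), (y, l)} \<in> snd G)"

end

theory Submission
  imports Defs
begin
lemma perp_span:
  fixes a :: "'a::euclidean_space"
  assumes "\<And>x. (\<forall>b\<in>B. b \<bullet> x = 0) \<Longrightarrow> a \<bullet> x = 0"
  shows "a \<in> span B"
proof -
  obtain y z where y: "y \<in> span B" and z: "\<And>w. w \<in> span B \<Longrightarrow> orthogonal z w" and a: "a = y + z"
    using orthogonal_subspace_decomp_exists by blast
  have "\<forall>b\<in>B. b \<bullet> z = 0" using z span_base by (metis orthogonal_def inner_commute)
  then have "a \<bullet> z = 0" using assms by blast
  moreover have "y \<bullet> z = 0" using z[OF y] by (simp add: orthogonal_def inner_commute)
  ultimately have "z \<bullet> z = 0" using a by (simp add: inner_add_left)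
  then have "z = 0" by simp
  then show ?thesis using a y by simp
qed

lemma notin_span_perp:
  fixes a :: "'a::euclidean_space"
  assumes "a \<notin> span B"
  shows "\<exists>w. (\<forall>b\<in>B. b \<bullet> w = 0) \<and> a \<bullet> w \<noteq> 0"
  using perp_span assms by blast

lemma normal_multiple:
  fixes a b :: "'a::euclidean_space"
  assumes "{x. a \<bullet> x = 0} \<subseteq> {x. b \<bullet> x = 0}"
  shows "\<exists>c. b = c *\<^sub>R a"
proof -
  have "b \<in> span {a}" by (rule perp_span) (use assms in auto)
  then show ?thesis by (auto simp: span_singleton)
qed

lemma normal_two:
  fixes a b c :: "'a::euclidean_space"
  assumes "{x. a \<bullet> x = 0} \<inter> {x. b \<bullet> x = 0} \<subseteq> {x. c \<bullet> x = 0}"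
  shows "\<exists>p q. c = p *\<^sub>R a + q *\<^sub>R b"
proof -
  have "c \<in> span {a, b}" by (rule perp_span) (use assms in auto)
  then obtain p where "c - p *\<^sub>R a \<in> span {b}" by (auto simp: span_breakdown_eq)
  then obtain q where "c - p *\<^sub>R a = q *\<^sub>R b" by (auto simp: span_singleton)
  then show ?thesis by (metis add_diff_cancel_left' diff_add_cancel)
qed

definition nrm_ok :: "('a::euclidean_space set \<Rightarrow> 'a) \<Rightarrow> 'a set set \<Rightarrow> bool" where
  "nrm_ok n B \<longleftrightarrow> (\<forall>H\<in>B. n H \<noteq> 0 \<and> H = {x. n H \<bullet> x = 0})"

definition cell :: "('a::euclidean_space set \<Rightarrow> 'a) \<Rightarrow> 'a set set \<Rightarrow> 'a \<Rightarrow> 'a set" where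
  "cell n B x = {y. \<forall>H\<in>B. n H \<bullet> y \<noteq> 0 \<and> (0 < n H \<bullet> y \<longleftrightarrow> 0 < n H \<bullet> x)}"

lemma nrm_ok_subset: "nrm_ok n B \<Longrightarrow> C \<subseteq> B \<Longrightarrow> nrm_ok n C"
  unfolding nrm_ok_def by blast

lemma outside_iff: "nrm_ok n B \<Longrightarrow> x \<notin> \<Union>B \<longleftrightarrow> (\<forall>H\<in>B. n H \<bullet> x \<noteq> 0)"
  unfolding nrm_ok_def by blast

lemma cell_convex: "convex (cell n B x)"
  unfolding convex_def cell_def
proof (intro ballI allI impI, safe)
  fix y z :: 'a and u v :: real and H
  assume y: "\<forall>H\<in>B. n H \<bullet> y \<noteq> 0 \<and> (0 < n H \<bullet> y) = (0 < n H \<bullet> x)"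
    and z: "\<forall>H\<in>B. n H \<bullet> z \<noteq> 0 \<and> (0 < n H \<bullet> z) = (0 < n H \<bullet> x)"
    and uv: "0 \<le> u" "0 \<le> v" "u + v = 1" and H: "H \<in> B"
  have e: "n H \<bullet> (u *\<^sub>R y + v *\<^sub>R z) = u * (n H \<bullet> y) + v * (n H \<bullet> z)"
    by (simp add: inner_add_right)
  have s: "(0 < n H \<bullet> y) = (0 < n H \<bullet> z)" "n H \<bullet> y \<noteq> 0" "n H \<bullet> z \<noteq> 0" "(0 < n H \<bullet> y) = (0 < n H \<bullet> x)"
    using y z H by auto
  have pos: "0 < u * (n H \<bullet> y) + v * (n H \<bullet> z)" if "0 < n H \<bullet> y"
  proof (cases "u = 0")
    case True then show ?thesis using uv s that by simp
  next
    case False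
    then have "u * (n H \<bullet> y) > 0" using uv that by simp
    moreover have "v * (n H \<bullet> z) \<ge> 0" using uv s that by simp
    ultimately show ?thesis by linarith
  qed
  have neg: "u * (n H \<bullet> y) + v * (n H \<bullet> z) < 0" if "n H \<bullet> y < 0"
  proof (cases "u = 0")
    case True then show ?thesis using uv s that by simp
  next
    case False
    then have "u * (n H \<bullet> y) < 0" using uv that by (simp add: mult_pos_neg)
    moreover have "v * (n H \<bullet> z) \<le> 0" using uv s that
      by (metis mult_nonneg_nonpos linorder_not_le order_less_imp_le)
    ultimately show ?thesis by linarith
  qed
  have P: "0 < n H \<bullet> (u *\<^sub>R y + v *\<^sub>R z)" if "0 < n H \<bullet> x"
    using pos e s(4) that by simp
  have N: "n H \<bullet> (u *\<^sub>R y + v *\<^sub>R z) < 0" if "\<not> 0 < n H \<bullet> x"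
  proof -
    have "n H \<bullet> y < 0" using s(2) s(4) that by linarith
    then show ?thesis using neg e by simp
  qed
  show "n H \<bullet> (u *\<^sub>R y + v *\<^sub>R z) = 0 \<Longrightarrow> False"
    using P N by fastforce
  show "0 < n H \<bullet> (u *\<^sub>R y + v *\<^sub>R z) \<Longrightarrow> 0 < n H \<bullet> x"
    using N by fastforce
  show "0 < n H \<bullet> x \<Longrightarrow> 0 < n H \<bullet> (u *\<^sub>R y + v *\<^sub>R z)"
    using P by blast
qed

lemma self_in_cell: "nrm_ok n B \<Longrightarrow> x \<notin> \<Union>B \<Longrightarrow> x \<in> cell n B x"
  unfolding cell_def nrm_ok_def by blast

lemma cell_outside: "nrm_ok n B \<Longrightarrow> cell n B x \<subseteq> UNIV - \<Union>B"
  unfolding cell_def nrm_ok_def by blast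

lemma component_eq_cell:
  assumes ok: "nrm_ok n B" and x: "x \<notin> \<Union>B"
  shows "connected_component_set (UNIV - \<Union>B) x = cell n B x"
proof
  show "cell n B x \<subseteq> connected_component_set (UNIV - \<Union>B) x"
    by (rule connected_component_maximal) (use self_in_cell[OF ok x] cell_outside[OF ok] convex_connected[OF cell_convex] in auto)
next
  show "connected_component_set (UNIV - \<Union>B) x \<subseteq> cell n B x"
  proof
    fix y assume y: "y \<in> connected_component_set (UNIV - \<Union>B) x"
    let ?C = "connected_component_set (UNIV - \<Union>B) x"
    have C: "connected ?C" "x \<in> ?C" "?C \<subseteq> UNIV - \<Union>B"
      using x by (auto simp: connected_component_subset)
    have ny: "\<forall>H\<in>B. n H \<bullet> y \<noteq> 0" using y C(3) ok outside_iff by blast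
    have nx: "\<forall>H\<in>B. n H \<bullet> x \<noteq> 0" using x ok outside_iff by blast
    have "(0 < n H \<bullet> y \<longleftrightarrow> 0 < n H \<bullet> x)" if H: "H \<in> B" for H
    proof (rule ccontr)
      assume "\<not> ?thesis"
      then have "(n H \<bullet> x \<le> 0 \<and> 0 \<le> n H \<bullet> y) \<or> (n H \<bullet> y \<le> 0 \<and> 0 \<le> n H \<bullet> x)" by auto
      then obtain z where "z \<in> ?C" "n H \<bullet> z = 0"
        using connected_ivt_hyperplane[OF C(1) C(2) y] connected_ivt_hyperplane[OF C(1) y C(2)] by blast
      then show False using C(3) ok H outside_iff by blast
    qed
    then show "y \<in> cell n B x" using ny unfolding cell_def by blast
  qed
qed

lemma regions_eq: "nrm_ok n B \<Longrightarrow> regions B = cell n B ` (UNIV - \<Union>B)"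
  unfolding regions_def components_def by (intro image_cong) (auto simp: component_eq_cell)

lemma cell_eq_iff:
  assumes "nrm_ok n B" "x \<notin> \<Union>B" "y \<notin> \<Union>B"
  shows "cell n B x = cell n B y \<longleftrightarrow> (\<forall>H\<in>B. 0 < n H \<bullet> x \<longleftrightarrow> 0 < n H \<bullet> y)"
proof
  assume "cell n B x = cell n B y"
  then have "x \<in> cell n B y" using self_in_cell assms by metis
  then show "\<forall>H\<in>B. 0 < n H \<bullet> x \<longleftrightarrow> 0 < n H \<bullet> y" unfolding cell_def by blast
next
  assume "\<forall>H\<in>B. 0 < n H \<bullet> x \<longleftrightarrow> 0 < n H \<bullet> y"
  then show "cell n B x = cell n B y" unfolding cell_def by auto
qed

lemma sep_iff:
  assumes ok: "nrm_ok n B" and H: "H \<in> B" and x: "x \<notin> \<Union>B" and y: "y \<notin> \<Union>B"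
  shows "(separates H (cell n B x) (cell n B y) \<or> separates H (cell n B y) (cell n B x))
     \<longleftrightarrow> ((0 < n H \<bullet> x) \<noteq> (0 < n H \<bullet> y))"
proof
  have nx: "n H \<bullet> x \<noteq> 0" and ny: "n H \<bullet> y \<noteq> 0" and nH: "n H \<noteq> 0" and Heq: "H = {z. n H \<bullet> z = 0}"
  proof -
    have c0: "n H \<noteq> 0 \<and> H = {z. n H \<bullet> z = 0}" using ok H unfolding nrm_ok_def by (rule bspec)
    show "n H \<noteq> 0" using c0 by (rule conjunct1)
    show "H = {z. n H \<bullet> z = 0}" using c0 by (rule conjunct2)
    have "\<forall>H\<in>B. n H \<bullet> x \<noteq> 0" using outside_iff[OF ok, of x] x by (rule iffD1)
    then show "n H \<bullet> x \<noteq> 0" using H by (rule bspec)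
    have "\<forall>H\<in>B. n H \<bullet> y \<noteq> 0" using outside_iff[OF ok, of y] y by (rule iffD1)
    then show "n H \<bullet> y \<noteq> 0" using H by (rule bspec)
  qed
  have gen: "(0 < n H \<bullet> p) \<noteq> (0 < n H \<bullet> q)" if sep: "separates H (cell n B p) (cell n B q)"
    and "p \<notin> \<Union>B" "q \<notin> \<Union>B" for p q
  proof -
    obtain a where a: "a \<noteq> 0" "H = {x. a \<bullet> x = 0}" "\<forall>z\<in>cell n B p. 0 < a \<bullet> z" "\<forall>z\<in>cell n B q. a \<bullet> z < 0"
      using sep unfolding separates_def by (elim exE conjE) (rule that)
    have ap: "a \<bullet> p > 0" using a(3) self_in_cell[OF ok that(2)] by blast
    have aq: "a \<bullet> q < 0" using a(4) self_in_cell[OF ok that(3)] by blast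
    have "{x. n H \<bullet> x = 0} = {x. a \<bullet> x = 0}" using Heq[symmetric] a(2) by (rule trans)
    then obtain c where c: "a = c *\<^sub>R n H" using normal_multiple[of "n H" a] by auto
    have "c * (n H \<bullet> p) > 0" using ap c by simp
    moreover have "c * (n H \<bullet> q) < 0" using aq c by simp
    ultimately show ?thesis by (auto simp: zero_less_mult_iff mult_less_0_iff)
  qed
  show "separates H (cell n B x) (cell n B y) \<or> separates H (cell n B y) (cell n B x) \<Longrightarrow> (0 < n H \<bullet> x) \<noteq> (0 < n H \<bullet> y)"
    using gen[OF _ x y] gen[OF _ y x] by blast
  assume d: "(0 < n H \<bullet> x) \<noteq> (0 < n H \<bullet> y)"
  have cx: "\<And>z. z \<in> cell n B x \<Longrightarrow> (0 < n H \<bullet> z) = (0 < n H \<bullet> x) \<and> n H \<bullet> z \<noteq> 0"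
    and cy: "\<And>z. z\<in>cell n B y \<Longrightarrow> (0 < n H \<bullet> z) = (0 < n H \<bullet> y) \<and> n H \<bullet> z \<noteq> 0"
    using H unfolding cell_def by auto
  have sp: "separates H (cell n B p) (cell n B q)" if "0 < n H \<bullet> p" "\<not> 0 < n H \<bullet> q"
     "\<And>z. z \<in> cell n B p \<Longrightarrow> (0 < n H \<bullet> z) = (0 < n H \<bullet> p) \<and> n H \<bullet> z \<noteq> 0"
     "\<And>z. z \<in> cell n B q \<Longrightarrow> (0 < n H \<bullet> z) = (0 < n H \<bullet> q) \<and> n H \<bullet> z \<noteq> 0" for p q
    unfolding separates_def
  proof (intro exI[of _ "n H"] conjI ballI)
    show "n H \<noteq> 0" "H = {x. n H \<bullet> x = 0}" by (fact nH, fact Heq)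
    fix z assume "z \<in> cell n B p" then show "0 < n H \<bullet> z" using that(1,3) by blast
  next
    fix z assume "z \<in> cell n B q" then have "\<not> 0 < n H \<bullet> z" "n H \<bullet> z \<noteq> 0" using that(2,4) by blast+
    then show "n H \<bullet> z < 0" by linarith
  qed
  show "separates H (cell n B x) (cell n B y) \<or> separates H (cell n B y) (cell n B x)"
  proof (cases "0 < n H \<bullet> x")
    case True
    have "separates H (cell n B x) (cell n B y)" by (rule sp) (use True d cx cy in auto)
    then show ?thesis by (rule disjI1)
  next
    case False
    have "separates H (cell n B y) (cell n B x)" by (rule sp) (use False d cx cy in auto)
    then show ?thesis by (rule disjI2)
  qed
qed

definition dset :: "('a::euclidean_space set \<Rightarrow> 'a) \<Rightarrow> 'a set set \<Rightarrow> 'a \<Rightarrow> 'a \<Rightarrow> 'a set set" where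
  "dset n B x y = {H\<in>B. (0 < n H \<bullet> x) \<noteq> (0 < n H \<bullet> y)}"

lemma sepset_eq:
  assumes ok: "nrm_ok n B" and x: "x \<notin> \<Union>B" and y: "y \<notin> \<Union>B"
  shows "{H\<in>B. separates H (cell n B x) (cell n B y) \<or> separates H (cell n B y) (cell n B x)} = dset n B x y"
  unfolding dset_def using sep_iff[OF ok _ x y] by blast

lemma edge_iff:
  assumes ok: "nrm_ok n B" and x: "x \<notin> \<Union>B" and y: "y \<notin> \<Union>B"
  shows "{cell n B x, cell n B y} \<in> snd (region_graph B) \<longleftrightarrow> card (dset n B x y) = 1"
proof
  assume "{cell n B x, cell n B y} \<in> snd (region_graph B)"
  then obtain R R' where RR: "{cell n B x, cell n B y} = {R, R'}" "R \<noteq> R'"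
    "card {H\<in>B. separates H R R' \<or> separates H R' R} = 1"
    unfolding region_graph_def by auto
  have "{H\<in>B. separates H R R' \<or> separates H R' R} = {H\<in>B. separates H (cell n B x) (cell n B y) \<or> separates H (cell n B y) (cell n B x)}"
    using RR(1) by (auto simp: doubleton_eq_iff)
  then show "card (dset n B x y) = 1" using RR(3) sepset_eq[OF ok x y] by simp
next
  assume c: "card (dset n B x y) = 1"
  then obtain H where "H \<in> dset n B x y" by (metis card_1_singletonE insertI1)
  then have ne: "cell n B x \<noteq> cell n B y" using cell_eq_iff[OF ok x y] unfolding dset_def by blast
  have rx: "cell n B x \<in> regions B" and ry: "cell n B y \<in> regions B" using regions_eq[OF ok] x y by auto
  have "card {H\<in>B. separates H (cell n B x) (cell n B y) \<or> separates H (cell n B y) (cell n B x)} = 1"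
    using c sepset_eq[OF ok x y] by simp
  with ne rx ry show "{cell n B x, cell n B y} \<in> snd (region_graph B)"
    unfolding region_graph_def snd_conv by blast
qed

lemma count_below_exists:
  fixes T :: "real set"
  assumes "finite T" "i \<le> card T"
  shows "\<exists>t. t \<notin> T \<and> card {s\<in>T. s < t} = i"
  using assms
proof (induction "card T" arbitrary: T i)
  case 0
  then have "T = {}" by simp
  then show ?case using 0 by auto
next
  case (Suc k)
  then have ne: "T \<noteq> {}" by auto
  define m where "m = Max T"
  define T' where "T' = T - {m}"
  have mT: "m \<in> T" using Suc.prems ne m_def by simp
  have fT': "finite T'" using Suc.prems T'_def by simp
  have cT': "card T' = k" using Suc.hyps(2) mT fT' T'_def by simp
  have below: "\<And>s. s \<in> T' \<Longrightarrow> s < m"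
    using Suc.prems(1) T'_def m_def by (metis DiffE Max_ge insertI1 order_le_less)
  have Teq: "T = insert m T'" using mT T'_def by auto
  show ?case
  proof (cases "i = card T")
    case True
    have "{s\<in>T. s < m + 1} = T" using Suc.prems(1) m_def by (auto dest: Max_ge[of T] intro: le_less_trans[of _ "Max T" "Max T + 1"])
    moreover have "m + 1 \<notin> T" using Suc.prems(1) m_def Max_ge by fastforce
    ultimately show ?thesis using True by metis
  next
    case False
    then have ik: "i \<le> k" using Suc.prems Suc.hyps(2) by simp
    obtain t where t: "t \<notin> T'" "card {s\<in>T'. s < t} = i" using Suc.hyps(1)[OF cT'[symmetric] fT'] ik cT' by auto
    show ?thesis
    proof (cases "t < m")
      case True
      have "{s\<in>T. s < t} = {s\<in>T'. s < t}" using Teq True by auto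
      moreover have "t \<notin> T" using Teq t(1) True by auto
      ultimately show ?thesis using t(2) by metis
    next
      case False
      then have "{s\<in>T'. s < t} = T'" using below by force
      then have ik2: "i = k" using t(2) cT' by simp
      define t0 where "t0 = (if T' = {} then m - 1 else (Max T' + m) / 2)"
      have t0m: "t0 < m"
        using below fT' Max_in[OF fT'] t0_def by auto
      have t0b: "\<And>s. s \<in> T' \<Longrightarrow> s < t0"
      proof -
        fix s assume s: "s \<in> T'"
        then have "T' \<noteq> {}" by auto
        then have "s \<le> Max T'" "Max T' < m" using s fT' below Max_in by auto
        then show "s < t0" using \<open>T' \<noteq> {}\<close> t0_def by auto
      qed
      have "{s\<in>T. s < t0} = T'" using Teq t0m t0b by auto
      moreover have "t0 \<notin> T" using Teq t0m t0b by auto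
      ultimately show ?thesis using ik2 cT' by metis
    qed
  qed
qed

locale ss =
  fixes A A0 A1 :: "'a::euclidean_space set set" and n :: "'a set \<Rightarrow> 'a" and v :: 'a
  assumes finA: "finite A" and Aeq: "A = A0 \<union> A1" and disj: "A0 \<inter> A1 = {}"
    and ok: "nrm_ok n A"
    and v0: "\<And>H. H \<in> A0 \<Longrightarrow> n H \<bullet> v = 0" and v1: "\<And>H. H \<in> A1 \<Longrightarrow> n H \<bullet> v > 0"
    and modular: "\<And>H1 H2. H1 \<in> A1 \<Longrightarrow> H2 \<in> A1 \<Longrightarrow> H1 \<noteq> H2 \<Longrightarrow> \<exists>H\<in>A0. H1 \<inter> H2 \<subseteq> H"
begin

lemma ok0: "nrm_ok n A0" using ok Aeq nrm_ok_subset by blast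
lemma ok1: "nrm_ok n A1" using ok Aeq nrm_ok_subset by blast
lemma fin0: "finite A0" using finA Aeq by simp
lemma fin1: "finite A1" using finA Aeq by simp

lemma mem_hyp: assumes "H \<in> A" shows "z \<in> H \<longleftrightarrow> n H \<bullet> z = 0"
proof -
  have e0: "n H \<noteq> 0 \<and> H = {z. n H \<bullet> z = 0}" using ok assms unfolding nrm_ok_def by (rule bspec)
  have "H = {z. n H \<bullet> z = 0}" using e0 by (rule conjunct2)
  then have "z \<in> H \<longleftrightarrow> z \<in> {z. n H \<bullet> z = 0}" by (rule arg_cong[where f="\<lambda>S. z \<in> S"])
  then show ?thesis by (simp only: mem_Collect_eq)
qed

lemma out_iff: "x \<notin> \<Union>B \<longleftrightarrow> (\<forall>H\<in>B. n H \<bullet> x \<noteq> 0)" if "B \<subseteq> A"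
  using mem_hyp that by blast

lemma outA_iff: "x \<notin> \<Union>A \<longleftrightarrow> x \<notin> \<Union>A0 \<and> x \<notin> \<Union>A1"
  using Aeq by blast

definition P1 :: "'a \<Rightarrow> 'a set set" where
  "P1 x = {H\<in>A1. 0 < n H \<bullet> x}"

definition tau :: "'a \<Rightarrow> 'a set \<Rightarrow> real" where
  "tau x H = - (n H \<bullet> x) / (n H \<bullet> v)"

lemma line0: "H \<in> A0 \<Longrightarrow> n H \<bullet> (x + t *\<^sub>R v) = n H \<bullet> x"
  using v0 by (simp add: inner_add_right)

lemma line1_pos: "H \<in> A1 \<Longrightarrow> 0 < n H \<bullet> (x + t *\<^sub>R v) \<longleftrightarrow> tau x H < t"
proof -
  assume H: "H \<in> A1"
  have p: "n H \<bullet> v > 0" using v1 H by blast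
  have "n H \<bullet> (x + t *\<^sub>R v) = n H \<bullet> x + t * (n H \<bullet> v)" by (simp add: inner_add_right)
  then show ?thesis using p unfolding tau_def by (auto simp: field_simps)
qed

lemma line1_zero: "H \<in> A1 \<Longrightarrow> n H \<bullet> (x + t *\<^sub>R v) = 0 \<longleftrightarrow> tau x H = t"
proof -
  assume H: "H \<in> A1"
  have p: "n H \<bullet> v > 0" using v1 H by blast
  have "n H \<bullet> (x + t *\<^sub>R v) = n H \<bullet> x + t * (n H \<bullet> v)" by (simp add: inner_add_right)
  then show ?thesis using p unfolding tau_def by (auto simp: field_simps)
qed

lemma tau_inj: assumes x: "x \<notin> \<Union>A0" shows "inj_on (tau x) A1"
proof (rule inj_onI, rule ccontr)
  fix H1 H2 assume H: "H1 \<in> A1" "H2 \<in> A1" "tau x H1 = tau x H2" "H1 \<noteq> H2"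
  obtain H where HH: "H \<in> A0" "H1 \<inter> H2 \<subseteq> H" using modular H by blast
  let ?z = "x + tau x H1 *\<^sub>R v"
  have "n H1 \<bullet> ?z = 0" "n H2 \<bullet> ?z = 0" using line1_zero H by auto
  then have "?z \<in> H1" "?z \<in> H2" using mem_hyp Aeq H by auto
  then have "?z \<in> H" using HH by blast
  then have "n H \<bullet> ?z = 0" using mem_hyp Aeq HH by blast
  then have "n H \<bullet> x = 0" using line0 HH by simp
  then show False using x HH(1) out_iff[of A0 x] Aeq by blast
qed

lemma card_tau: "x \<notin> \<Union>A0 \<Longrightarrow> card (tau x ` A1) = card A1"
  using tau_inj card_image by blast

lemma line_out: assumes x: "x \<notin> \<Union>A0" and t: "t \<notin> tau x ` A1"
  shows "x + t *\<^sub>R v \<notin> \<Union>A"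
proof -
  have "\<forall>H\<in>A0. n H \<bullet> (x + t *\<^sub>R v) \<noteq> 0" using x out_iff[of A0 x] Aeq line0 by auto
  moreover have "\<forall>H\<in>A1. n H \<bullet> (x + t *\<^sub>R v) \<noteq> 0" using t line1_zero by force
  ultimately show ?thesis using out_iff[of A] Aeq by blast
qed

lemma line_P1: "P1 (x + t *\<^sub>R v) = {H\<in>A1. tau x H < t}"
  unfolding P1_def using line1_pos by blast

lemma line_cardP1: assumes x: "x \<notin> \<Union>A0"
  shows "card (P1 (x + t *\<^sub>R v)) = card {s\<in>tau x ` A1. s < t}"
proof -
  have "{s\<in>tau x ` A1. s < t} = tau x ` {H\<in>A1. tau x H < t}" by auto
  moreover have "inj_on (tau x) {H\<in>A1. tau x H < t}" using tau_inj[OF x] by (rule inj_on_subset) auto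
  ultimately show ?thesis using line_P1 card_image by metis
qed

lemma line_cell0: assumes x: "x \<notin> \<Union>A0" shows "cell n A0 (x + t *\<^sub>R v) = cell n A0 x"
  unfolding cell_def using line0 by simp

lemma exists_level: assumes x: "x \<notin> \<Union>A0" and i: "i \<le> card A1"
  shows "\<exists>t. t \<notin> tau x ` A1 \<and> card (P1 (x + t *\<^sub>R v)) = i"
proof -
  obtain t where "t \<notin> tau x ` A1" "card {s\<in>tau x ` A1. s < t} = i"
    using count_below_exists[of "tau x ` A1" i] fin1 card_tau[OF x] i by auto
  then show ?thesis using line_cardP1[OF x] by metis
qed

end

context ss begin

lemma chain:
  assumes x: "x \<notin> \<Union>A" and y: "y \<notin> \<Union>A" and c: "cell n A0 x = cell n A0 y"
  shows "P1 x \<subseteq> P1 y \<or> P1 y \<subseteq> P1 x"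
proof (rule ccontr)
  assume "\<not> ?thesis"
  then obtain H1 H2 where H1: "H1 \<in> A1" "0 < n H1 \<bullet> x" "\<not> 0 < n H1 \<bullet> y"
    and H2: "H2 \<in> A1" "0 < n H2 \<bullet> y" "\<not> 0 < n H2 \<bullet> x"
    unfolding P1_def by blast
  have x0: "x \<notin> \<Union>A0" and x1: "x \<notin> \<Union>A1" and y0: "y \<notin> \<Union>A0" and y1: "y \<notin> \<Union>A1"
    using x y outA_iff by auto
  have n1y: "n H1 \<bullet> y < 0" using H1 y1 out_iff[of A1 y] Aeq by force
  have n2x: "n H2 \<bullet> x < 0" using H2 x1 out_iff[of A1 x] Aeq by force
  define a1 where "a1 = n H1 \<bullet> v"
  define a2 where "a2 = n H2 \<bullet> v"
  have a1: "a1 > 0" and a2: "a2 > 0" using v1 H1 H2 a1_def a2_def by auto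
  define c where "c = a2 *\<^sub>R n H1 - a1 *\<^sub>R n H2"
  have cx: "c \<bullet> x > 0"
  proof -
    have "c \<bullet> x = a2 * (n H1 \<bullet> x) - a1 * (n H2 \<bullet> x)" unfolding c_def by (simp add: inner_diff_left)
    moreover have "a2 * (n H1 \<bullet> x) > 0" using a2 H1 by simp
    moreover have "a1 * (n H2 \<bullet> x) < 0" using a1 n2x by (simp add: mult_pos_neg)
    ultimately show ?thesis by linarith
  qed
  have cy: "c \<bullet> y < 0"
  proof -
    have "c \<bullet> y = a2 * (n H1 \<bullet> y) - a1 * (n H2 \<bullet> y)" unfolding c_def by (simp add: inner_diff_left)
    moreover have "a2 * (n H1 \<bullet> y) < 0" using a2 n1y by (simp add: mult_pos_neg)
    moreover have "a1 * (n H2 \<bullet> y) > 0" using a1 H2 by simp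
    ultimately show ?thesis by linarith
  qed
  obtain z where z: "z \<in> closed_segment x y" "c \<bullet> z = 0"
    using connected_ivt_hyperplane[OF connected_segment[of x y] ends_in_segment(2) ends_in_segment(1), of c 0] cx cy
    by auto
  have sub: "closed_segment x y \<subseteq> cell n A0 x"
    using closed_segment_subset[OF self_in_cell[OF ok0 x0] _ cell_convex] self_in_cell[OF ok0 y0] c by auto
  then have zc: "z \<in> cell n A0 x" using z by blast
  define t where "t = - (n H1 \<bullet> z) / a1"
  define w where "w = z + t *\<^sub>R v"
  have "n H1 \<bullet> w = (n H1 \<bullet> z) + t * a1" unfolding w_def a1_def by (simp add: inner_add_right)
  then have w1: "n H1 \<bullet> w = 0" unfolding t_def using a1 by simp
  have "n H2 \<bullet> w = (n H2 \<bullet> z) + t * a2" unfolding w_def a2_def by (simp add: inner_add_right)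
  also have "\<dots> = - (c \<bullet> z) / a1" unfolding t_def c_def using a1 by (simp add: inner_diff_left field_simps)
  finally have w2: "n H2 \<bullet> w = 0" using z(2) by simp
  have H12: "H1 \<noteq> H2" using H1 H2 by blast
  obtain H where HH: "H \<in> A0" "H1 \<inter> H2 \<subseteq> H" using modular[OF H1(1) H2(1) H12] by blast
  have "w \<in> H1" "w \<in> H2" using mem_hyp Aeq H1(1) H2(1) w1 w2 by auto
  then have "w \<in> H" using HH by blast
  then have "n H \<bullet> w = 0" using mem_hyp Aeq HH by blast
  then have "n H \<bullet> z = 0" using line0 HH w_def by simp
  moreover have "n H \<bullet> z \<noteq> 0" using zc HH(1) unfolding cell_def by blast
  ultimately show False by blast
qed

definition g :: "'a \<Rightarrow> 'a set \<times> nat" where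
  "g x = (cell n A0 x, card (P1 x))"

definition f :: "'a set \<Rightarrow> 'a set \<times> nat" where
  "f C = g (SOME x. x \<in> C)"

lemma signsA_iff: assumes "x \<notin> \<Union>A" "y \<notin> \<Union>A"
  shows "cell n A x = cell n A y \<longleftrightarrow> cell n A0 x = cell n A0 y \<and> P1 x = P1 y"
proof -
  have x0: "x \<notin> \<Union>A0" "y \<notin> \<Union>A0" using assms outA_iff by auto
  have "cell n A x = cell n A y \<longleftrightarrow> (\<forall>H\<in>A. 0 < n H \<bullet> x \<longleftrightarrow> 0 < n H \<bullet> y)"
    using cell_eq_iff[OF ok assms] .
  also have "\<dots> \<longleftrightarrow> (\<forall>H\<in>A0. 0 < n H \<bullet> x \<longleftrightarrow> 0 < n H \<bullet> y) \<and> (\<forall>H\<in>A1. 0 < n H \<bullet> x \<longleftrightarrow> 0 < n H \<bullet> y)"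
    using Aeq by blast
  also have "\<dots> \<longleftrightarrow> cell n A0 x = cell n A0 y \<and> P1 x = P1 y"
    using cell_eq_iff[OF ok0 x0] unfolding P1_def by blast
  finally show ?thesis .
qed

lemma g_cong: "x \<notin> \<Union>A \<Longrightarrow> y \<notin> \<Union>A \<Longrightarrow> cell n A x = cell n A y \<Longrightarrow> g x = g y"
  using signsA_iff unfolding g_def by simp

lemma g_inj: assumes "x \<notin> \<Union>A" "y \<notin> \<Union>A" "g x = g y" shows "cell n A x = cell n A y"
proof -
  have c: "cell n A0 x = cell n A0 y" and k: "card (P1 x) = card (P1 y)" using assms(3) unfolding g_def by auto
  have fin: "finite (P1 x)" "finite (P1 y)" using fin1 unfolding P1_def by auto
  have "P1 x = P1 y" using chain[OF assms(1,2) c] k fin card_subset_eq by metis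
  then show ?thesis using signsA_iff[OF assms(1,2)] c by blast
qed

lemma f_cell: assumes x: "x \<notin> \<Union>A" shows "f (cell n A x) = g x"
proof -
  have "x \<in> cell n A x" using self_in_cell[OF ok x] .
  then have r: "(SOME z. z \<in> cell n A x) \<in> cell n A x" by (rule someI)
  define r where "r = (SOME z. z \<in> cell n A x)"
  have rin: "r \<in> cell n A x" using r r_def by simp
  then have rout: "r \<notin> \<Union>A" using cell_outside[OF ok] by blast
  have "cell n A r = cell n A x" using cell_eq_iff[OF ok rout x] rin unfolding cell_def by blast
  then have "g r = g x" using g_cong rout x by blast
  then show ?thesis unfolding f_def r_def by simp
qed

lemma regA: "regions A = cell n A ` (UNIV - \<Union>A)" using regions_eq[OF ok] .
lemma regA0: "regions A0 = cell n A0 ` (UNIV - \<Union>A0)" using regions_eq[OF ok0] .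

lemma f_inj: "inj_on f (regions A)"
proof (rule inj_onI)
  fix C D assume "C \<in> regions A" "D \<in> regions A" "f C = f D"
  then obtain x y where "x \<notin> \<Union>A" "y \<notin> \<Union>A" "C = cell n A x" "D = cell n A y" "f C = f D"
    using regA by auto
  then show "C = D" using f_cell g_inj by metis
qed

lemma f_image: "f ` regions A = regions A0 \<times> {0..card A1}"
proof
  show "f ` regions A \<subseteq> regions A0 \<times> {0..card A1}"
  proof
    fix p assume "p \<in> f ` regions A"
    then obtain x where x: "x \<notin> \<Union>A" "p = g x" using regA f_cell by auto
    have "x \<notin> \<Union>A0" using x outA_iff by auto
    then have "cell n A0 x \<in> regions A0" using regA0 by auto
    moreover have "card (P1 x) \<le> card A1" using fin1 unfolding P1_def by (simp add: card_mono)
    ultimately show "p \<in> regions A0 \<times> {0..card A1}" using x unfolding g_def by auto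
  qed
next
  show "regions A0 \<times> {0..card A1} \<subseteq> f ` regions A"
  proof
    fix p assume "p \<in> regions A0 \<times> {0..card A1}"
    then obtain x i where x: "x \<notin> \<Union>A0" "p = (cell n A0 x, i)" "i \<le> card A1" using regA0 by auto
    obtain t where t: "t \<notin> tau x ` A1" "card (P1 (x + t *\<^sub>R v)) = i" using exists_level[OF x(1) x(3)] by blast
    let ?y = "x + t *\<^sub>R v"
    have y: "?y \<notin> \<Union>A" using line_out[OF x(1) t(1)] .
    have "g ?y = p" unfolding g_def using line_cell0[OF x(1)] t(2) x(2) by simp
    then show "p \<in> f ` regions A" using f_cell[OF y] regA y by (metis DiffI UNIV_I image_eqI)
  qed
qed

end

context ss begin

lemma dset_fin: "finite (dset n B x y)" if "B \<subseteq> A"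
  using finA that unfolding dset_def by (auto intro: finite_subset)

lemma card_dsetA: "card (dset n A x y) = card (dset n A0 x y) + card (dset n A1 x y)"
proof -
  have "dset n A x y = dset n A0 x y \<union> dset n A1 x y" unfolding dset_def using Aeq by blast
  moreover have "dset n A0 x y \<inter> dset n A1 x y = {}" unfolding dset_def using disj by blast
  ultimately show ?thesis using dset_fin[of A0] dset_fin[of A1] Aeq by (simp add: card_Un_disjoint)
qed

lemma dset0_empty: "x \<notin> \<Union>A0 \<Longrightarrow> y \<notin> \<Union>A0 \<Longrightarrow> dset n A0 x y = {} \<longleftrightarrow> cell n A0 x = cell n A0 y"
  using cell_eq_iff[OF ok0] unfolding dset_def by blast

lemma dset1_empty: "dset n A1 x y = {} \<longleftrightarrow> P1 x = P1 y"
  unfolding dset_def P1_def by blast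

lemma finP1: "finite (P1 x)"
  using fin1 unfolding P1_def by auto
lemma P1sub: "P1 x \<subseteq> A1"
  unfolding P1_def by auto

lemma dset1_single: assumes "dset n A1 x y = {H}"
  shows "card (P1 x) = card (P1 y) + 1 \<or> card (P1 y) = card (P1 x) + 1"
proof -
  have H: "H \<in> A1" "(0 < n H \<bullet> x) \<noteq> (0 < n H \<bullet> y)" using assms unfolding dset_def by blast+
  have oth: "\<And>H'. H' \<in> A1 \<Longrightarrow> H' \<noteq> H \<Longrightarrow> (0 < n H' \<bullet> x) = (0 < n H' \<bullet> y)"
    using assms unfolding dset_def by blast
  show ?thesis
  proof (cases "0 < n H \<bullet> x")
    case True
    then have "P1 x = insert H (P1 y)" "H \<notin> P1 y" using H oth unfolding P1_def by auto
    then show ?thesis using finP1 by simp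
  next
    case False
    then have "P1 y = insert H (P1 x)" "H \<notin> P1 x" using H oth unfolding P1_def by auto
    then show ?thesis using finP1 by simp
  qed
qed

lemma edgeA_regions: "{C, D} \<in> snd (region_graph A) \<Longrightarrow> C \<in> regions A \<and> D \<in> regions A"
  unfolding region_graph_def by (auto simp: doubleton_eq_iff)

definition EG :: "('a set \<times> nat) set set" where
  "EG = {{f C, f D} | C D. {C, D} \<in> snd (region_graph A)}"

lemma EG_intro: assumes "x \<notin> \<Union>A" "y \<notin> \<Union>A" "card (dset n A x y) = 1"
  shows "{g x, g y} \<in> EG"
proof -
  have e: "{cell n A x, cell n A y} \<in> snd (region_graph A)" using edge_iff[OF ok assms(1,2)] assms(3) by blast
  have "f (cell n A x) = g x" "f (cell n A y) = g y" using f_cell assms by auto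
  then have "{g x, g y} = {f (cell n A x), f (cell n A y)}" by simp
  with e show ?thesis unfolding EG_def by blast
qed

lemma PPmem:
  assumes "a \<in> regions A0" "b \<in> regions A0" "i \<le> card A1" "j \<le> card A1"
    "({a, b} \<in> snd (region_graph A0) \<and> i = j) \<or> (a = b \<and> (j = i + 1 \<or> i = j + 1))"
  shows "{(a, i), (b, j)} \<in> snd (path_product (region_graph A0) (card A1))"
proof -
  have fr: "fst (region_graph A0) = regions A0" by (simp add: region_graph_def)
  have "\<exists>x y i' j'. {(a, i), (b, j)} = {(x, i'), (y, j')} \<and> x \<in> fst (region_graph A0) \<and> y \<in> fst (region_graph A0) \<and> i' \<le> card A1 \<and> j' \<le> card A1 \<and>
        (({x, y} \<in> snd (region_graph A0) \<and> i' = j') \<or> (x = y \<and> (j' = i' + 1 \<or> i' = j' + 1)))"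
    by (intro exI[of _ a] exI[of _ b] exI[of _ i] exI[of _ j]) (use assms fr in simp)
  then show ?thesis unfolding path_product_def snd_conv fst_conv by (rule CollectI)
qed

lemma EG_sub: "EG \<subseteq> snd (path_product (region_graph A0) (card A1))"
proof
  fix e assume "e \<in> EG"
  then obtain C D where e: "e = {f C, f D}" "{C, D} \<in> snd (region_graph A)" unfolding EG_def by blast
  have CD: "C \<in> cell n A ` (UNIV - \<Union>A)" "D \<in> cell n A ` (UNIV - \<Union>A)"
    using edgeA_regions[OF e(2)] regA by auto
  obtain x where x: "x \<notin> \<Union>A" "C = cell n A x" using CD(1) by blast
  obtain y where y: "y \<notin> \<Union>A" "D = cell n A y" using CD(2) by blast
  have xy: "x \<notin> \<Union>A" "y \<notin> \<Union>A" "C = cell n A x" "D = cell n A y" using x y by auto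
  have "f C = g x" "f D = g y" using f_cell x y by auto
  then have e2: "e = {g x, g y}" using e(1) by simp
  have c1: "card (dset n A x y) = 1" using edge_iff[OF ok xy(1,2)] e(2) xy by simp
  have x0: "x \<notin> \<Union>A0" "y \<notin> \<Union>A0" using xy outA_iff by auto
  have R: "cell n A0 x \<in> regions A0" "cell n A0 y \<in> regions A0" using regA0 x0 by auto
  have le: "card (P1 x) \<le> card A1" "card (P1 y) \<le> card A1" using card_mono[OF fin1 P1sub] by auto
  show "e \<in> snd (path_product (region_graph A0) (card A1))"
  proof (cases "card (dset n A0 x y) = 0")
    case True
    then have "dset n A0 x y = {}" using dset_fin[of A0] Aeq by auto
    then have ceq: "cell n A0 x = cell n A0 y" using dset0_empty x0 by blast
    have "card (dset n A1 x y) = 1" using c1 True card_dsetA by simp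
    then obtain H where "dset n A1 x y = {H}" using card_1_singletonE by blast
    then have "card (P1 x) = card (P1 y) + 1 \<or> card (P1 y) = card (P1 x) + 1" by (rule dset1_single)
    then show ?thesis unfolding e2 g_def using PPmem[of "cell n A0 x" "cell n A0 y" "card (P1 x)" "card (P1 y)"] R le ceq by auto
  next
    case False
    then have "card (dset n A0 x y) = 1" "card (dset n A1 x y) = 0" using c1 card_dsetA by auto
    then have "dset n A1 x y = {}" using dset_fin[of A1] Aeq by auto
    then have peq: "P1 x = P1 y" using dset1_empty by blast
    have "{cell n A0 x, cell n A0 y} \<in> snd (region_graph A0)"
      using edge_iff[OF ok0 x0] \<open>card (dset n A0 x y) = 1\<close> by blast
    then show ?thesis unfolding e2 g_def using PPmem[of "cell n A0 x" "cell n A0 y" "card (P1 x)" "card (P1 y)"] R le peq by auto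
  qed
qed

lemma EG_step: assumes R: "R \<in> regions A0" and i: "i < card A1"
  shows "{(R, i), (R, i + 1)} \<in> EG"
proof -
  obtain x where x: "x \<notin> \<Union>A0" "R = cell n A0 x" using R regA0 by auto
  have i1: "i \<le> card A1" "i + 1 \<le> card A1" using i by auto
  obtain t1 where t1: "t1 \<notin> tau x ` A1" "card (P1 (x + t1 *\<^sub>R v)) = i" using exists_level[OF x(1) i1(1)] by blast
  obtain t2 where t2: "t2 \<notin> tau x ` A1" "card (P1 (x + t2 *\<^sub>R v)) = i + 1" using exists_level[OF x(1) i1(2)] by blast
  let ?y1 = "x + t1 *\<^sub>R v" and ?y2 = "x + t2 *\<^sub>R v"
  have y: "?y1 \<notin> \<Union>A" "?y2 \<notin> \<Union>A" using line_out x t1 t2 by auto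
  have "t1 < t2"
  proof (rule ccontr)
    assume "\<not> t1 < t2"
    then have "P1 ?y2 \<subseteq> P1 ?y1" unfolding line_P1 by auto
    then have "card (P1 ?y2) \<le> card (P1 ?y1)" using finP1 card_mono by blast
    then show False using t1 t2 by simp
  qed
  then have sub: "P1 ?y1 \<subseteq> P1 ?y2" unfolding line_P1 by auto
  have "dset n A1 ?y1 ?y2 = P1 ?y2 - P1 ?y1" using sub unfolding dset_def P1_def by blast
  then have d1: "card (dset n A1 ?y1 ?y2) = 1" using sub finP1 t1 t2 by (simp add: card_Diff_subset)
  have "cell n A0 ?y1 = cell n A0 ?y2" using line_cell0 x by simp
  then have "dset n A0 ?y1 ?y2 = {}" using dset0_empty y outA_iff by blast
  then have "card (dset n A ?y1 ?y2) = 1" using card_dsetA d1 by simp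
  then have "{g ?y1, g ?y2} \<in> EG" using EG_intro y by blast
  moreover have "g ?y1 = (R, i)" "g ?y2 = (R, i + 1)" unfolding g_def using line_cell0 x t1 t2 by auto
  ultimately show ?thesis by simp
qed

lemma EG_level: assumes R: "R \<in> regions A0" "R' \<in> regions A0" "{R, R'} \<in> snd (region_graph A0)"
  and k: "k = 0 \<or> k = card A1"
  shows "{(R, k), (R', k)} \<in> EG"
proof -
  obtain x x' where x: "x \<notin> \<Union>A0" "R = cell n A0 x" "x' \<notin> \<Union>A0" "R' = cell n A0 x'" using R regA0 by auto
  have d0: "card (dset n A0 x x') = 1" using edge_iff[OF ok0 x(1) x(3)] R(3) x by simp
  have kle: "k \<le> card A1" using k by auto
  obtain t where t: "t \<notin> tau x ` A1" "card (P1 (x + t *\<^sub>R v)) = k" using exists_level[OF x(1) kle] by auto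
  obtain t' where t': "t' \<notin> tau x' ` A1" "card (P1 (x' + t' *\<^sub>R v)) = k" using exists_level[OF x(3) kle] by auto
  let ?y = "x + t *\<^sub>R v" and ?y' = "x' + t' *\<^sub>R v"
  have y: "?y \<notin> \<Union>A" "?y' \<notin> \<Union>A" using line_out x t t' by auto
  have "P1 ?y = P1 ?y'"
  proof (cases "k = 0")
    case True then show ?thesis using t t' finP1 by simp
  next
    case False
    then have "k = card A1" using k by simp
    then have "P1 ?y = A1" "P1 ?y' = A1" using t t' P1sub fin1 card_subset_eq by metis+
    then show ?thesis by simp
  qed
  then have "dset n A1 ?y ?y' = {}" using dset1_empty by blast
  moreover have "dset n A0 ?y ?y' = dset n A0 x x'" unfolding dset_def by (rule Collect_cong) (auto simp: line0)
  ultimately have "card (dset n A ?y ?y') = 1" using card_dsetA d0 by simp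
  then have "{g ?y, g ?y'} \<in> EG" using EG_intro y by blast
  moreover have "g ?y = (R, k)" "g ?y' = (R', k)" unfolding g_def using line_cell0 x t t' by auto
  ultimately show ?thesis by simp
qed

theorem main_ss: "\<exists>G. suspended G (card A1) (region_graph A0) \<and> graph_iso (region_graph A) G"
proof (intro exI conjI)
  let ?G = "(regions A0 \<times> {0..card A1}, EG)"
  show "suspended ?G (card A1) (region_graph A0)"
    unfolding suspended_def
  proof (intro conjI ballI allI impI)
    show "fst ?G = fst (path_product (region_graph A0) (card A1))"
      by (simp add: path_product_def region_graph_def)
    show "snd ?G \<subseteq> snd (path_product (region_graph A0) (card A1))" using EG_sub by simp
    fix R i assume "R \<in> fst (region_graph A0)" "i < card A1"
    then show "{(R, i), (R, i + 1)} \<in> snd ?G" using EG_step by (simp add: region_graph_def)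
  next
    fix R R' assume "R \<in> fst (region_graph A0)" "R' \<in> fst (region_graph A0)" "{R, R'} \<in> snd (region_graph A0)"
    then show "{(R, 0), (R', 0)} \<in> snd ?G" "{(R, card A1), (R', card A1)} \<in> snd ?G"
      using EG_level by (simp_all add: region_graph_def)
  qed
  show "graph_iso (region_graph A) ?G"
    unfolding graph_iso_def
  proof (intro exI conjI ballI)
    show "bij_betw f (fst (region_graph A)) (fst ?G)"
      using f_inj f_image by (simp add: bij_betw_def region_graph_def)
    fix C D assume C: "C \<in> fst (region_graph A)" and D: "D \<in> fst (region_graph A)"
    show "{C, D} \<in> snd (region_graph A) \<longleftrightarrow> {f C, f D} \<in> snd ?G"
    proof
      assume "{C, D} \<in> snd (region_graph A)"
      then show "{f C, f D} \<in> snd ?G" unfolding EG_def by auto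
    next
      assume "{f C, f D} \<in> snd ?G"
      then obtain C' D' where e: "{f C, f D} = {f C', f D'}" "{C', D'} \<in> snd (region_graph A)"
        unfolding EG_def by auto
      have r: "C \<in> regions A" "D \<in> regions A" "C' \<in> regions A" "D' \<in> regions A"
        using C D edgeA_regions[OF e(2)] by (auto simp: region_graph_def)
      have "(f C = f C' \<and> f D = f D') \<or> (f C = f D' \<and> f D = f C')" using e(1) by (auto simp: doubleton_eq_iff)
      then have "(C = C' \<and> D = D') \<or> (C = D' \<and> D = C')" using f_inj r by (meson inj_onD)
      then show "{C, D} \<in> snd (region_graph A)" using e(2) by (auto simp: insert_commute)
    qed
  qed
qed

end

lemma avoid:
  fixes g :: "'b \<Rightarrow> 'a::euclidean_space" and N :: "'a set"
  assumes "finite F" "\<forall>H\<in>F. \<exists>w. (\<forall>b\<in>N. b \<bullet> w = 0) \<and> g H \<bullet> w \<noteq> 0"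
  shows "\<exists>v. (\<forall>b\<in>N. b \<bullet> v = 0) \<and> (\<forall>H\<in>F. g H \<bullet> v \<noteq> 0)"
  using assms
proof (induction F rule: finite_induct)
  case empty
  show ?case by (intro exI[of _ 0]) simp
next
  case (insert H F)
  obtain v where v: "\<forall>b\<in>N. b \<bullet> v = 0" "\<forall>H'\<in>F. g H' \<bullet> v \<noteq> 0" using insert by blast
  obtain w where w: "\<forall>b\<in>N. b \<bullet> w = 0" "g H \<bullet> w \<noteq> 0" using insert.prems by blast
  define Bad where "Bad = (\<lambda>H'. - (g H' \<bullet> v) / (g H' \<bullet> w)) ` insert H F"
  have "finite Bad" using insert.hyps(1) Bad_def by simp
  then obtain e :: real where e: "e \<notin> Bad" using ex_new_if_finite[OF infinite_UNIV_char_0] by blast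
  let ?u = "v + e *\<^sub>R w"
  have "\<forall>b\<in>N. b \<bullet> ?u = 0" using v w by (simp add: inner_add_right)
  moreover have "g H' \<bullet> ?u \<noteq> 0" if H': "H' \<in> insert H F" for H'
  proof
    assume z: "g H' \<bullet> ?u = 0"
    have eq: "g H' \<bullet> ?u = g H' \<bullet> v + e * (g H' \<bullet> w)" by (simp add: inner_add_right)
    show False
    proof (cases "g H' \<bullet> w = 0")
      case True
      then have "H' \<in> F" using H' w(2) by auto
      then show False using v(2) z eq True by simp
    next
      case False
      then have "e = - (g H' \<bullet> v) / (g H' \<bullet> w)" using z eq by (simp add: field_simps)
      then have "e \<in> Bad" using H' Bad_def by blast
      then show False using e by blast
    qed
  qed
  ultimately show ?case by blast
qed

lemma ss_from_rank:
  fixes A A0 A1 :: "'a::euclidean_space set set"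
  assumes arr: "arrangement A"
    and r3: "arr_rank A \<ge> 3"
    and Aeq: "A = A0 \<union> A1" and disj: "A0 \<inter> A1 = {}"
    and r0: "arr_rank A0 = arr_rank A - 1"
    and md: "\<forall>H1\<in>A1. \<forall>H2\<in>A1. H1 \<noteq> H2 \<longrightarrow> (\<exists>H\<in>A0. H1 \<inter> H2 \<subseteq> H)"
  shows "\<exists>n v. ss A A0 A1 n v"
proof -
  define n0 where "n0 H = (SOME a. a \<noteq> 0 \<and> H = {x. a \<bullet> x = (0::real)})" for H :: "'a set"
  have n0: "n0 H \<noteq> 0 \<and> H = {x. n0 H \<bullet> x = 0}" if "H \<in> A" for H
  proof -
    have "linear_hyperplane H" using arr that unfolding arrangement_def by blast
    then have "\<exists>a. a \<noteq> 0 \<and> H = {x. a \<bullet> x = 0}" unfolding linear_hyperplane_def .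
    then show ?thesis unfolding n0_def by (rule someI_ex)
  qed
  have n0ne: "n0 H \<noteq> 0" if "H \<in> A" for H using n0[OF that] by (rule conjunct1)
  have n0eq: "H = {x. n0 H \<bullet> x = 0}" if "H \<in> A" for H using n0[OF that] by (rule conjunct2)
  define N0 where "N0 = normals A0"
  have n0N0: "n0 H \<in> N0" if "H \<in> A0" for H
  proof -
    have HA: "H \<in> A" using that Aeq by blast
    show ?thesis unfolding N0_def normals_def mem_Collect_eq
      by (rule conjI[OF n0ne[OF HA] bexI[of "\<lambda>H'. H' = {x. n0 H \<bullet> x = 0}", OF n0eq[OF HA] that]])
  qed
  have notspan: "n0 H1 \<notin> span N0" if H1: "H1 \<in> A1" for H1
  proof
    assume sp1: "n0 H1 \<in> span N0"
    have allsp: "n0 H2 \<in> span N0" if H2: "H2 \<in> A1" for H2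
    proof (cases "H2 = H1")
      case True then show ?thesis using sp1 by simp
    next
      case False
      then obtain H where H: "H \<in> A0" "H2 \<inter> H1 \<subseteq> H" using md H1 H2 by blast
      have HA: "H \<in> A" "H1 \<in> A" "H2 \<in> A" using H H1 H2 Aeq by auto
      have "{x. n0 H2 \<bullet> x = 0} \<inter> {x. n0 H1 \<bullet> x = 0} \<subseteq> {x. n0 H \<bullet> x = 0}"
        using H(2) by (simp only: n0eq[OF HA(1), symmetric] n0eq[OF HA(2), symmetric] n0eq[OF HA(3), symmetric])
      then obtain p q where pq: "n0 H = p *\<^sub>R n0 H2 + q *\<^sub>R n0 H1" using normal_two by blast
      have p0: "p \<noteq> 0"
      proof
        assume "p = 0"
        then have hq: "n0 H = q *\<^sub>R n0 H1" using pq by simp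
        then have "q \<noteq> 0" using n0ne[OF HA(1)] by auto
        then have E: "{x. n0 H \<bullet> x = 0} = {x. n0 H1 \<bullet> x = 0}" using hq by auto
        have "H = {x. n0 H \<bullet> x = 0}" by (rule n0eq[OF HA(1)])
        also have "\<dots> = {x. n0 H1 \<bullet> x = 0}" by (rule E)
        also have "\<dots> = H1" by (rule n0eq[OF HA(2), symmetric])
        finally have "H = H1" .
        then show False using H(1) H1 disj by blast
      qed
      have "n0 H2 = (1 / p) *\<^sub>R (n0 H - q *\<^sub>R n0 H1)" using pq p0 by simp
      moreover have "n0 H - q *\<^sub>R n0 H1 \<in> span N0"
        using span_base[OF n0N0[OF H(1)]] sp1 by (simp add: span_diff span_mul)
      ultimately show ?thesis by (simp add: span_mul)
    qed
    have "normals A \<subseteq> span N0"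
    proof
      fix a assume "a \<in> normals A"
      then obtain H where a: "a \<noteq> 0" "H \<in> A" "H = {x. a \<bullet> x = 0}" unfolding normals_def by blast
      show "a \<in> span N0"
      proof (cases "H \<in> A0")
        case True
        have "a \<in> normals A0" unfolding normals_def mem_Collect_eq
          by (rule conjI[OF a(1) bexI[of "\<lambda>H'. H' = {x. a \<bullet> x = 0}", OF a(3) True]])
        then show ?thesis unfolding N0_def by (rule span_base)
      next
        case False
        then have "H \<in> A1" using a Aeq by blast
        have "{x. n0 H \<bullet> x = 0} = {x. a \<bullet> x = 0}" using n0eq[OF a(2), symmetric] a(3) by (rule trans)
        then have "{x. n0 H \<bullet> x = 0} \<subseteq> {x. a \<bullet> x = 0}" by (rule equalityD1)
        then obtain c where "a = c *\<^sub>R n0 H" using normal_multiple by blast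
        then show ?thesis using allsp[OF \<open>H \<in> A1\<close>] by (simp add: span_mul)
      qed
    qed
    then have "span (normals A) \<subseteq> span N0" by (simp add: span_minimal)
    moreover have "N0 \<subseteq> normals A" unfolding N0_def normals_def using Aeq by blast
    then have "span N0 \<subseteq> span (normals A)" by (rule span_mono)
    ultimately have "span N0 = span (normals A)" by blast
    then have "arr_rank A0 = arr_rank A" unfolding arr_rank_def N0_def by simp
    then show False using r0 r3 by simp
  qed
  have "\<forall>H\<in>A1. \<exists>w. (\<forall>b\<in>N0. b \<bullet> w = 0) \<and> n0 H \<bullet> w \<noteq> 0"
    using notspan notin_span_perp by blast
  moreover have finA1: "finite A1" using arr Aeq unfolding arrangement_def by simp
  ultimately obtain v where v: "\<forall>b\<in>N0. b \<bullet> v = 0" "\<forall>H\<in>A1. n0 H \<bullet> v \<noteq> 0"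
    using avoid[of A1 N0 n0] by blast
  define n where "n H = (if n0 H \<bullet> v < 0 then - n0 H else n0 H)" for H
  have "ss A A0 A1 n v"
  proof
    show "finite A" using arr unfolding arrangement_def by simp
    show "A = A0 \<union> A1" by (fact Aeq)
    show "A0 \<inter> A1 = {}" by (fact disj)
    show "nrm_ok n A" unfolding nrm_ok_def
    proof
      fix H assume H: "H \<in> A"
      have "n H \<noteq> 0" using n0ne[OF H] unfolding n_def by simp
      moreover have "{x. n H \<bullet> x = 0} = {x. n0 H \<bullet> x = 0}" unfolding n_def by auto
      moreover have "H = {x. n H \<bullet> x = 0}" using n0eq[OF H] calculation(2)[symmetric] by (rule trans)
      ultimately show "n H \<noteq> 0 \<and> H = {x. n H \<bullet> x = 0}" by blast
    qed
    fix H assume H: "H \<in> A0"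
    have "n0 H \<bullet> v = 0" using v(1) n0N0[OF H] by blast
    then show "n H \<bullet> v = 0" unfolding n_def by simp
  next
    fix H assume H: "H \<in> A1"
    have "n0 H \<bullet> v \<noteq> 0" using v(2) H by blast
    then show "n H \<bullet> v > 0" unfolding n_def by auto
  next
    fix H1 H2 assume "H1 \<in> A1" "H2 \<in> A1" "H1 \<noteq> H2"
    then show "\<exists>H\<in>A0. H1 \<inter> H2 \<subseteq> H" using md by blast
  qed
  then show ?thesis by blast
qed

theorem lemma3p1:
  fixes A A0 A1 :: "'a::euclidean_space set set"
  assumes "arrangement A"
    and "arr_rank A \<ge> 3"
    and "A = A0 \<union> A1" and "A0 \<inter> A1 = {}"
    and "A0 \<noteq> {}" and "A1 \<noteq> {}"
    and "supersolvable A0" and "arr_rank A0 = arr_rank A - 1"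
    and "\<forall>H1\<in>A1. \<forall>H2\<in>A1. H1 \<noteq> H2 \<longrightarrow> (\<exists>H\<in>A0. H1 \<inter> H2 \<subseteq> H)"
  shows "\<exists>G. suspended G (card A1) (region_graph A0) \<and> graph_iso (region_graph A) G"
proof -
  obtain n v where "ss A A0 A1 n v" using ss_from_rank[OF assms(1,2,3,4,8,9)] by blast
  then show ?thesis by (rule ss.main_ss)
qed

end
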